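(* Let $L\ge 2$ and $d_0,d_1,\dots,d_{L-1}\in\mathbb{N}^+$, $d_L=1$. Let $\mathcal{B}_M=\langle \mathbf{W}_k\rangle_{k=1}^L$ with $\mathbf{W}_k\in\mathbb{R}^{d_k\times d_{k-1}}$ be the mean parameters of an aggregation of BAMs $\mathcal{A}(\mathcal{B}_M)$ (defined in the context). For $k\in\{1,\dots,L\}$ let $R_k=\{-1,1\}^{d_k}$. For $x\in\mathbb{R}^{d_0}$, $x\neq 0$, define the vector $\mathbf{P}_1(x)\in[0,1]^{2^{d_1}}$, indexed by $s\in R_1$, by $$\mathbf{P}_1(x)[s]=\prod_{i=1}^{d_1}\Big(\tfrac12+\tfrac{s^i}{2}\,\mathrm{Erf}\Big(\tfrac{\mathbf{W}_1^i\cdot x}{\sqrt2\,\|x\|}\Big)\Big),$$ and for $k\in\{2,\dots,L\}$ define the matrix $\mathbf{\Psi}_k\in[0,1]^{2^{d_k}\times 2^{d_{k-1}}}$, with rows indexed by $s\in R_k$ and columns by $\bar s\in R_{k-1}$, by $$\mathbf{\Psi}_k[s,\bar s]=\prod_{i=1}^{d_k}\Big(\tfrac12+\tfrac{s^i}{2}\,\mathrm{Erf}\Big(\tfrac{\mathbf{W}_k^i\cdot \bar s}{\sqrt{2d_{k-1}}}\Big)\Big),$$ where $\mathbf{W}_k^i$ is the $i$-th row of $\mathbf{W}_k$ and $s^i$ the $i$-th coordinate of $s$. Let $\mathbf{u}$ be the row vector indexed by $R_L=\{-1,1\}$ with $\mathbf{u}[1]=1$ and $\mathbf{u}[-1]=-1$,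 and set $$\mathbf{H}=\mathbf{u}\cdot\mathbf{\Psi}_L\cdot\mathbf{\Psi}_{L-1}\cdots\mathbf{\Psi}_3\cdot\mathbf{\Psi}_2 .$$ Then $\mathbf{P}_1(x)$ is a probability distribution on $R_1$, equal to the distribution of the leading hidden layer output $F^1_{\mathcal{B}}(x)$ for $\mathcal{B}\sim\mathcal{A}(\mathcal{B}_M)$; $\mathbf{H}\in[-1,1]^{2^{d_1}}$, its entry indexed by $s\in R_1$ being the expected output $\mathbb{E}_{\mathcal{B}\sim\mathcal{A}(\mathcal{B}_M)}[F_{\mathcal{B}}(x)\mid F^1_{\mathcal{B}}(x)=s]$ of the rest of the network given the leading hidden layer output $s$; and for every $x\ne0$, $$F_{\mathcal{A}(\mathcal{B}_M)}(x)=\mathbf{H}\cdot\mathbf{P}_1(x).$$ In particular, $F_{\mathcal{A}(\mathcal{B}_M)}$ is computed by a network with a single hidden layer of width $2^{d_1}$ (built from $\mathrm{Erf}$ of linear functions of $x/\|x\|$) followed by one output neuron with identity activation and weight vector $\mathbf{H}$, which does not depend on $x$.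
   Context: $\mathrm{sgn}(t)=-1$ if $t<0$ and $+1$ otherwise, applied element-wise to vectors. $\mathrm{Erf}(t)=\frac{2}{\sqrt\pi}\int_0^t e^{-u^2}du$. A binary activated multilayer network (BAM) with architecture $\langle d_k\rangle_{k=0}^L$ (biases omitted / absorbed into the weights) is a tuple $\mathcal{B}=\langle \mathbf{V}_k\rangle_{k=1}^L$, $\mathbf{V}_k\in\mathbb{R}^{d_k\times d_{k-1}}$, computing $F^1_{\mathcal{B}}(x)=\mathrm{sgn}(\mathbf{V}_1x)$, $F^k_{\mathcal{B}}(x)=\mathrm{sgn}(\mathbf{V}_kF^{k-1}_{\mathcal{B}}(x))$ for $k\ge2$, and $F_{\mathcal{B}}(x)=F^L_{\mathcal{B}}(x)\in\{-1,1\}$ (since $d_L=1$). The aggregation of BAMs $\mathcal{A}(\mathcal{B}_M)$ with mean parameters $\mathcal{B}_M=\langle\mathbf{W}_k\rangle_{k=1}^L$ is the distribution over BAMs in which all entries of all $\mathbf{V}_k$ are independent with $(\mathbf{V}_k)_{ij}\sim\mathcal{N}((\mathbf{W}_k)_{ij},1)$ (isotropic Gaussian with identity covariance centered at $\mathcal{B}_M$). Its output is $F_{\mathcal{A}(\mathcal{B}_M)}(x)=\mathbb{E}_{\mathcal{B}\sim\mathcal{A}(\mathcal{B}_M)}F_{\mathcal{B}}(x)=\Pr(F_{\mathcal{B}}(x)=1)-\Pr(F_{\mathcal{B}}(x)=-1)$. *)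

theory Defs
  imports "HOL-Probability.Probability"
begin

text \<open>Vectors of R^n are functions nat \<Rightarrow> real, only coordinates i < n matter.
 Mean parameters: W k i j = (W_k)_{ij}, for 1 \<le> k \<le> L, i < d k, j < d (k-1)
 (indices are 0-based). A BAM is V :: nat \<times> nat \<times> nat \<Rightarrow> real, V (k,i,j) = (V_k)_{ij}.\<close>

definition bsgn :: "real \<Rightarrow> real" where
  "bsgn t = (if t < 0 then -1 else 1)"

definition Erf :: "real \<Rightarrow> real" where
  "Erf t = 2 / sqrt pi * (LBINT u=ereal 0..ereal t. exp (-(u\<^sup>2)))"

definition bam_index :: "nat \<Rightarrow> (nat \<Rightarrow> nat) \<Rightarrow> (nat \<times> nat \<times> nat) set" where
  "bam_index L d = {(k,i,j). 1 \<le> k \<and> k \<le> L \<and> i < d k \<and> j < d (k - 1)}"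

definition aggr :: "nat \<Rightarrow> (nat \<Rightarrow> nat) \<Rightarrow> (nat \<Rightarrow> nat \<Rightarrow> nat \<Rightarrow> real)
    \<Rightarrow> (nat \<times> nat \<times> nat \<Rightarrow> real) measure" where
  "aggr L d W = PiM (bam_index L d)
      (\<lambda>(k,i,j). density lborel (\<lambda>v. ennreal (normal_density (W k i j) 1 v)))"

fun layer :: "(nat \<times> nat \<times> nat \<Rightarrow> real) \<Rightarrow> (nat \<Rightarrow> nat) \<Rightarrow> nat \<Rightarrow> (nat \<Rightarrow> real) \<Rightarrow> (nat \<Rightarrow> real)" where
  "layer V d 0 x = x"
| "layer V d (Suc k) x = (\<lambda>i. bsgn (\<Sum>j<d k. V (Suc k, i, j) * layer V d k x j))"

definition bam_out :: "(nat \<times> nat \<times> nat \<Rightarrow> real) \<Rightarrow> nat \<Rightarrow> (nat \<Rightarrow> nat) \<Rightarrow> (nat \<Rightarrow> real) \<Rightarrow> real" where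
  "bam_out V L d x = layer V d L x 0"

definition aggr_out :: "nat \<Rightarrow> (nat \<Rightarrow> nat) \<Rightarrow> (nat \<Rightarrow> nat \<Rightarrow> nat \<Rightarrow> real) \<Rightarrow> (nat \<Rightarrow> real) \<Rightarrow> real" where
  "aggr_out L d W x = (\<integral>V. bam_out V L d x \<partial>aggr L d W)"

definition Rset :: "(nat \<Rightarrow> nat) \<Rightarrow> nat \<Rightarrow> (nat \<Rightarrow> real) set" where
  "Rset d k = {s. (\<forall>i<d k. s i = -1 \<or> s i = 1) \<and> (\<forall>i. d k \<le> i \<longrightarrow> s i = 0)}"

definition vnorm :: "nat \<Rightarrow> (nat \<Rightarrow> real) \<Rightarrow> real" where
  "vnorm n x = sqrt (\<Sum>j<n. (x j)\<^sup>2)"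

definition P1 :: "(nat \<Rightarrow> nat) \<Rightarrow> (nat \<Rightarrow> nat \<Rightarrow> nat \<Rightarrow> real) \<Rightarrow> (nat \<Rightarrow> real) \<Rightarrow> (nat \<Rightarrow> real) \<Rightarrow> real" where
  "P1 d W x s = (\<Prod>i<d 1. (1/2 + s i / 2 *
       Erf ((\<Sum>j<d 0. W 1 i j * x j) / (sqrt 2 * vnorm (d 0) x))))"

definition Psi :: "(nat \<Rightarrow> nat) \<Rightarrow> (nat \<Rightarrow> nat \<Rightarrow> nat \<Rightarrow> real) \<Rightarrow> nat \<Rightarrow> (nat \<Rightarrow> real) \<Rightarrow> (nat \<Rightarrow> real) \<Rightarrow> real" where
  "Psi d W k s sb = (\<Prod>i<d k. (1/2 + s i / 2 *
       Erf ((\<Sum>j<d (k - 1). W k i j * sb j) / sqrt (2 * real (d (k - 1))))))"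

text \<open>hrow d W L n is the row vector u \<cdot> Psi_L \<cdots> Psi_{L-n+1}, indexed by R_{L-n}.
 u s = s 0 (u[1] = 1, u[-1] = -1).\<close>
fun hrow :: "(nat \<Rightarrow> nat) \<Rightarrow> (nat \<Rightarrow> nat \<Rightarrow> nat \<Rightarrow> real) \<Rightarrow> nat \<Rightarrow> nat \<Rightarrow> (nat \<Rightarrow> real) \<Rightarrow> real" where
  "hrow d W L 0 = (\<lambda>s. s 0)"
| "hrow d W L (Suc n) = (\<lambda>sb. \<Sum>s\<in>Rset d (L - n). hrow d W L n s * Psi d W (L - n) s sb)"

definition Hvec :: "nat \<Rightarrow> (nat \<Rightarrow> nat) \<Rightarrow> (nat \<Rightarrow> nat \<Rightarrow> nat \<Rightarrow> real) \<Rightarrow> (nat \<Rightarrow> real) \<Rightarrow> real" where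
  "Hvec L d W = hrow d W L (L - 1)"

end

theory Submission
  imports Defs
begin


lemma exp_nd: "exp (- (u::real)\<^sup>2) = sqrt pi * normal_density 0 (sqrt (1/2)) u"
  by (simp add: normal_density_def real_sqrt_divide power_divide real_sqrt_mult)

lemma integrable_e: "integrable lborel (\<lambda>u::real. exp (- u\<^sup>2))"
  unfolding exp_nd by simp

lemma set_integrable_e: "set_integrable lborel A (\<lambda>u::real. exp (- u\<^sup>2))" if "A \<in> sets borel"
  using that integrable_e unfolding set_integrable_def
  by (intro integrable_mult_indicator) auto

lemma e_half: "(LBINT u=0..\<infinity>. exp (- u\<^sup>2)) = sqrt pi / 2"
proof -
  have "(LBINT u=0..\<infinity>. exp (- u\<^sup>2)) = (LBINT u:{0<..}. exp (- u\<^sup>2))"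
    by (rule interval_lebesgue_integral_0_infty)
  also have "\<dots> = (LBINT u:{0..}. exp (- u\<^sup>2))"
    by (rule set_integral_discrete_difference[where X="{0}"]) auto
  also have "\<dots> = sqrt pi / 2"
    using gaussian_moment_0 unfolding set_lebesgue_integral_def
    by (rule has_bochner_integral_integral_eq)
  finally show ?thesis .
qed

lemma e_tail: "(LBINT u=ereal a..\<infinity>. exp (- u\<^sup>2)) = sqrt pi / 2 - (LBINT u=ereal 0..ereal a. exp (- u\<^sup>2))"
proof -
  have "(LBINT u=ereal 0..ereal a. exp (- u\<^sup>2)) + (LBINT u=ereal a..\<infinity>. exp (- u\<^sup>2)) = (LBINT u=ereal 0..\<infinity>. exp (- u\<^sup>2))"
    by (rule interval_integral_sum) (auto simp: interval_lebesgue_integrable_def intro!: set_integrable_e)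
  then show ?thesis using e_half by (simp add: zero_ereal_def)
qed

lemma e_lower: "(LBINT u:{..<-a}. exp (- u\<^sup>2)) = sqrt pi / 2 - (LBINT u=ereal 0..ereal a. exp (- u\<^sup>2))"
proof -
  have "(LBINT u:{..<-a}. exp (- u\<^sup>2)) = (LBINT u=-\<infinity>..ereal (-a). exp (- u\<^sup>2))"
    by (simp add: interval_lebesgue_integral_le_eq)
  also have "\<dots> = (LBINT u=ereal a..\<infinity>. exp (- u\<^sup>2))"
    by (subst interval_integral_reflect) simp
  finally show ?thesis using e_tail by simp
qed

lemma Erf_lower: "(LBINT u:{..<-a}. exp (- u\<^sup>2)) = sqrt pi / 2 * (1 - Erf a)"
  unfolding e_lower Erf_def by (simp add: field_simps)

lemma e_lower_pos: "0 < (LBINT u:{..<b::real}. exp (- u\<^sup>2))"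
proof -
  have int: "integrable lborel (\<lambda>u. indicator {..<b} u *\<^sub>R exp (- u\<^sup>2))"
    using set_integrable_e[of "{..<b}"] unfolding set_integrable_def by simp
  have ge: "0 \<le> (LBINT u:{..<b}. exp (- u\<^sup>2))"
    unfolding set_lebesgue_integral_def by (rule Bochner_Integration.integral_nonneg) (auto simp: indicator_def)
  moreover have "(LBINT u:{..<b}. exp (- u\<^sup>2)) \<noteq> 0"
  proof
    assume "(LBINT u:{..<b}. exp (- u\<^sup>2)) = 0"
    then have "AE u in lborel. indicator {..<b} u *\<^sub>R exp (- u\<^sup>2) = (0::real)"
      unfolding set_lebesgue_integral_def using int
      by (subst (asm) integral_nonneg_eq_0_iff_AE) auto
    then have "AE u in lborel. \<not> u < b"
      by (rule AE_mp) (auto simp: indicator_def)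
    then have "emeasure lborel {..<b} = 0"
      by (subst (asm) AE_iff_measurable[where N="{..<b}"]) auto
    moreover have "emeasure lborel {b-1..b-1/2} \<le> emeasure lborel {..<b}"
      by (rule emeasure_mono) auto
    ultimately show False by simp
  qed
  ultimately show ?thesis by simp
qed

lemma Erf_lt1: "Erf a < 1"
  using e_lower_pos[of "-a"] Erf_lower[of a] by (simp add: zero_less_mult_iff)

lemma Erf_odd: "Erf (-a) = - Erf a"
proof -
  have "(LBINT u=ereal 0..ereal (-a). exp (- u\<^sup>2)) = (LBINT u=ereal a..ereal 0. exp (- u\<^sup>2))"
    by (subst interval_integral_reflect) simp
  also have "\<dots> = - (LBINT u=ereal 0..ereal a. exp (- u\<^sup>2))"
    by (rule interval_integral_endpoints_reverse)
  finally show ?thesis unfolding Erf_def by simp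
qed

lemma Erf_gtm1: "-1 < Erf a"
  using Erf_lt1[of "-a"] Erf_odd[of a] by simp

lemma normal_lower:
  fixes \<mu> \<sigma> :: real assumes "0 < \<sigma>"
  shows "(\<integral>\<^sup>+y. ennreal (normal_density \<mu> \<sigma> y) * indicator {..<0} y \<partial>lborel)
       = ennreal (1/2 - Erf (\<mu> / (sqrt 2 * \<sigma>)) / 2)"
proof -
  define c where "c = sqrt 2 * \<sigma>"
  have c: "0 < c" using assms by (simp add: c_def)
  define a where "a = \<mu> / c"
  have "(\<integral>\<^sup>+y. ennreal (normal_density \<mu> \<sigma> y) * indicator {..<0} y \<partial>lborel)
      = ennreal \<bar>c\<bar> * (\<integral>\<^sup>+u. ennreal (normal_density \<mu> \<sigma> (\<mu> + c * u)) * indicator {..<0} (\<mu> + c * u) \<partial>lborel)"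
    by (rule nn_integral_real_affine) (use c in auto)
  also have "\<dots> = (\<integral>\<^sup>+u. ennreal (exp (- u\<^sup>2) / sqrt pi) * indicator {..<-a} u \<partial>lborel)"
  proof (subst nn_integral_cmult[symmetric], simp, intro nn_integral_cong)
    fix u :: real
    have ind: "indicator {..<0} (\<mu> + c * u) = (indicator {..<-a} u :: ennreal)"
      using c by (auto simp: indicator_def a_def field_simps)
    have "c * normal_density \<mu> \<sigma> (\<mu> + c * u) = exp (- u\<^sup>2) / sqrt pi"
      using assms unfolding normal_density_def c_def
      by (simp add: power_mult_distrib real_sqrt_mult field_simps)
    then show "ennreal \<bar>c\<bar> * (ennreal (normal_density \<mu> \<sigma> (\<mu> + c * u)) * indicator {..<0} (\<mu> + c * u))
        = ennreal (exp (- u\<^sup>2) / sqrt pi) * indicator {..<-a} u"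
      using c by (simp add: ind ennreal_mult''[symmetric] mult.assoc[symmetric])
  qed
  also have "\<dots> = ennreal (LBINT u:{..<-a}. exp (- u\<^sup>2) / sqrt pi)"
    using nn_set_integral_eq_set_integral[of lborel "\<lambda>u. exp (- u\<^sup>2) / sqrt pi" "{..<-a}"]
    using integrable_e by (simp add: mult.commute)
  also have "(LBINT u:{..<-a}. exp (- u\<^sup>2) / sqrt pi) = (LBINT u:{..<-a}. exp (- u\<^sup>2)) / sqrt pi"
    by (simp add: set_integral_divide_zero)
  also have "\<dots> = 1/2 - Erf a / 2"
    unfolding Erf_lower by (simp add: field_simps)
  finally show ?thesis by (simp add: a_def c_def)
qed



lemma comp_indep:
  fixes N :: "'i \<Rightarrow> 'a measure"
  assumes N: "\<And>p. prob_space (N p)" and I: "I \<noteq> {}"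
  shows "prob_space.indep_vars (PiM I N) N (\<lambda>p \<omega>. \<omega> p) I"
proof -
  interpret product_prob_space N
    by (simp add: product_prob_space_def product_prob_space_axioms_def product_sigma_finite_def N prob_space_imp_sigma_finite)
  interpret P: prob_space "PiM I N" by (rule prob_space_PiM) (simp add: N)
  have rv: "\<And>i. i \<in> I \<Longrightarrow> (\<lambda>\<omega>. \<omega> i) \<in> measurable (PiM I N) (N i)"
    by simp
  have "distr (PiM I N) (PiM I N) (\<lambda>x. \<lambda>i\<in>I. x i) = distr (PiM I N) (PiM I N) (\<lambda>x. x)"
    by (rule distr_cong) (auto simp: space_PiM)
  also have "\<dots> = PiM I N" by simp
  also have "\<dots> = PiM I (\<lambda>i. distr (PiM I N) (N i) (\<lambda>\<omega>. \<omega> i))"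
    by (rule PiM_cong) (auto simp: PiM_component)
  finally show ?thesis
    by (subst P.indep_vars_iff_distr_eq_PiM'[OF I rv]) auto
qed

lemma PiM_indep_events:
  fixes N :: "'i \<Rightarrow> 'a measure" and G :: "'t \<Rightarrow> 'i set" and Q :: "'t \<Rightarrow> ('i \<Rightarrow> 'a) \<Rightarrow> bool"
  assumes N: "\<And>p. prob_space (N p)" and I: "I \<noteq> {}"
    and T: "finite T" "T \<noteq> {}" and G: "\<And>t. t \<in> T \<Longrightarrow> G t \<subseteq> I" and disj: "disjoint_family_on G T"
    and Q: "\<And>t. t \<in> T \<Longrightarrow> {w \<in> space (PiM (G t) N). Q t w} \<in> sets (PiM (G t) N)"
  shows "measure (PiM I N) (\<Inter>t\<in>T. {\<omega> \<in> space (PiM I N). Q t (restrict \<omega> (G t))})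
       = (\<Prod>t\<in>T. measure (PiM I N) {\<omega> \<in> space (PiM I N). Q t (restrict \<omega> (G t))})"
proof -
  interpret P: prob_space "PiM I N" by (rule prob_space_PiM) (simp add: N)
  have "P.indep_vars (\<lambda>t. PiM (G t) N) (\<lambda>t \<omega>. restrict (\<lambda>p. \<omega> p) (G t)) T"
    by (rule P.indep_vars_restrict[OF comp_indep[OF N I]]) (use G disj in auto)
  then have "P.indep_events (\<lambda>t. {\<omega> \<in> space (PiM I N). Q t (restrict (\<lambda>p. \<omega> p) (G t))}) T"
    by (rule P.indep_eventsI_indep_vars) (rule Q)
  then show ?thesis
    unfolding P.indep_events_def using T by auto
qed

lemma row_prob:
  fixes N :: "'i \<Rightarrow> real measure" and mu :: "'i \<Rightarrow> real" and r :: "nat \<Rightarrow> 'i" and v :: "nat \<Rightarrow> real"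
  assumes Nd: "\<And>p. N p = density lborel (\<lambda>y. ennreal (normal_density (mu p) 1 y))"
    and r: "inj_on r {..<n}" "r ` {..<n} \<subseteq> I" and v: "\<exists>j<n. v j \<noteq> 0"
  shows "measure (PiM I N) {\<omega> \<in> space (PiM I N). (\<Sum>j<n. \<omega> (r j) * v j) < 0}
       = 1/2 - Erf ((\<Sum>j<n. mu (r j) * v j) / sqrt (2 * (\<Sum>j<n. (v j)\<^sup>2))) / 2"
proof -
  have Nprob: "\<And>p. prob_space (N p)" unfolding Nd by (rule prob_space_normal_density) simp
  interpret product_prob_space N
    by (simp add: product_prob_space_def product_prob_space_axioms_def product_sigma_finite_def Nprob prob_space_imp_sigma_finite)
  interpret P: prob_space "PiM I N" by (rule prob_space_PiM) (simp add: Nprob)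
  have setsN: "\<And>p. sets (N p) = sets borel" unfolding Nd by simp
  define J where "J = {j\<in>{..<n}. v j \<noteq> 0}"
  have J: "finite J" "J \<noteq> {}" "J \<subseteq> {..<n}" using v by (auto simp: J_def)
  have I: "I \<noteq> {}" using v r by auto
  have ind1: "P.indep_vars (\<lambda>j. PiM {r j} N) (\<lambda>j \<omega>. restrict (\<lambda>p. \<omega> p) {r j}) J"
    apply (rule P.indep_vars_restrict[OF comp_indep[OF Nprob I]])
    using r J by (auto simp: disjoint_family_on_def inj_on_def subset_eq)
  have meas: "(\<lambda>w. v j * w (r j)) \<in> borel_measurable (PiM {r j} N)" for j
  proof -
    have "(\<lambda>w. w (r j)) \<in> measurable (PiM {r j} N) (N (r j))"
      by (rule measurable_component_singleton) simp
    then have "(\<lambda>w. w (r j)) \<in> borel_measurable (PiM {r j} N)"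
      by (subst measurable_cong_sets[OF refl setsN[symmetric]])
    then show ?thesis by simp
  qed
  have ind2: "P.indep_vars (\<lambda>j. borel) (\<lambda>j x. v j * restrict (\<lambda>p. x p) {r j} (r j)) J"
    by (rule P.indep_vars_compose2[OF ind1]) (rule meas)
  have ind3: "P.indep_vars (\<lambda>j. borel) (\<lambda>j x. v j * x (r j)) J"
    using ind2 by simp
  have dist0: "distributed (PiM I N) lborel (\<lambda>\<omega>. \<omega> p) (\<lambda>y. ennreal (normal_density (mu p) 1 y))" if p: "p \<in> I" for p
  proof -
    have m: "(\<lambda>\<omega>. \<omega> p) \<in> measurable (PiM I N) (N p)"
      using p by (rule measurable_component_singleton)
    have m': "(\<lambda>\<omega>. \<omega> p) \<in> measurable (PiM I N) lborel"
      using m unfolding measurable_cong_sets[OF refl setsN[of p]] by simp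
    have "distr (PiM I N) lborel (\<lambda>\<omega>. \<omega> p) = distr (PiM I N) (N p) (\<lambda>\<omega>. \<omega> p)"
      by (rule distr_cong) (simp_all add: setsN)
    also have "\<dots> = N p" using p by (rule PiM_component)
    finally show ?thesis unfolding distributed_def using m' by (simp add: Nd)
  qed
  have dist1: "distributed (PiM I N) lborel (\<lambda>\<omega>. v j * \<omega> (r j)) (\<lambda>y. ennreal (normal_density (v j * mu (r j)) \<bar>v j\<bar> y))"
    if j: "j \<in> J" for j
  proof -
    have "r j \<in> I" using j J r by auto
    from P.normal_density_affine[OF dist0[OF this], of "v j" 0] j
    show ?thesis by (simp add: J_def)
  qed
  have dist2: "distributed (PiM I N) lborel (\<lambda>\<omega>. \<Sum>j\<in>J. v j * \<omega> (r j))
     (\<lambda>y. ennreal (normal_density (\<Sum>j\<in>J. v j * mu (r j)) (sqrt (\<Sum>j\<in>J. \<bar>v j\<bar>\<^sup>2)) y))"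
    by (rule P.sum_indep_normal[OF J(1,2) ind3]) (auto simp: J_def dist1)
  have eq1: "\<And>\<omega>. (\<Sum>j\<in>J. v j * \<omega> (r j)) = (\<Sum>j<n. \<omega> (r j) * v j)"
    by (rule sum.mono_neutral_cong_left) (auto simp: J_def)
  have eq2: "(\<Sum>j\<in>J. v j * mu (r j)) = (\<Sum>j<n. mu (r j) * v j)"
    by (rule sum.mono_neutral_cong_left) (auto simp: J_def)
  have eq3: "(\<Sum>j\<in>J. \<bar>v j\<bar>\<^sup>2) = (\<Sum>j<n. (v j)\<^sup>2)"
    by (rule sum.mono_neutral_cong_left) (auto simp: J_def)
  have Spos: "0 < (\<Sum>j<n. (v j)\<^sup>2)"
  proof -
    obtain j0 where j0: "j0 < n" "v j0 \<noteq> 0" using v by auto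
    have "0 < (v j0)\<^sup>2" using j0 by simp
    also have "\<dots> \<le> (\<Sum>j<n. (v j)\<^sup>2)"
      by (rule member_le_sum) (use j0 in auto)
    finally show ?thesis .
  qed
  have dist: "distributed (PiM I N) lborel (\<lambda>\<omega>. \<Sum>j<n. \<omega> (r j) * v j)
     (\<lambda>y. ennreal (normal_density (\<Sum>j<n. mu (r j) * v j) (sqrt (\<Sum>j<n. (v j)\<^sup>2)) y))"
    using dist2 unfolding eq1 eq2 eq3 .
  have "emeasure (PiM I N) ((\<lambda>\<omega>. \<Sum>j<n. \<omega> (r j) * v j) -` {..<0} \<inter> space (PiM I N))
      = ennreal (1/2 - Erf ((\<Sum>j<n. mu (r j) * v j) / (sqrt 2 * sqrt (\<Sum>j<n. (v j)\<^sup>2))) / 2)"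
    by (subst distributed_emeasure[OF dist]) (auto intro!: normal_lower Spos)
  moreover have "(\<lambda>\<omega>. \<Sum>j<n. \<omega> (r j) * v j) -` {..<0} \<inter> space (PiM I N)
      = {\<omega> \<in> space (PiM I N). (\<Sum>j<n. \<omega> (r j) * v j) < 0}" by auto
  moreover have "0 \<le> 1/2 - Erf ((\<Sum>j<n. mu (r j) * v j) / (sqrt 2 * sqrt (\<Sum>j<n. (v j)\<^sup>2))) / 2"
    using Erf_lt1 by (simp add: less_imp_le)
  ultimately show ?thesis
    by (simp add: measure_def real_sqrt_mult)
qed

lemma sign_prob:
  fixes N :: "'i \<Rightarrow> real measure" and mu :: "'i \<Rightarrow> real" and r :: "nat \<Rightarrow> 'i" and v :: "nat \<Rightarrow> real"
  assumes Nd: "\<And>p. N p = density lborel (\<lambda>y. ennreal (normal_density (mu p) 1 y))"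
    and r: "inj_on r {..<n}" "r ` {..<n} \<subseteq> I" and v: "\<exists>j<n. v j \<noteq> 0"
    and sg: "sg = -1 \<or> sg = 1"
  shows "measure (PiM I N) {\<omega> \<in> space (PiM I N). bsgn (\<Sum>j<n. \<omega> (r j) * v j) = sg}
       = 1/2 + sg/2 * Erf ((\<Sum>j<n. mu (r j) * v j) / sqrt (2 * (\<Sum>j<n. (v j)\<^sup>2)))"
proof -
  have Nprob: "\<And>p. prob_space (N p)" unfolding Nd by (rule prob_space_normal_density) simp
  interpret P: prob_space "PiM I N" by (rule prob_space_PiM) (simp add: Nprob)
  have setsN: "\<And>p. sets (N p) = sets borel" unfolding Nd by simp
  have cm: "(\<lambda>\<omega>. \<omega> (r j)) \<in> borel_measurable (PiM I N)" if "j < n" for j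
  proof -
    have "(\<lambda>w. w (r j)) \<in> measurable (PiM I N) (N (r j))"
      by (rule measurable_component_singleton) (use that r in auto)
    then show ?thesis by (subst measurable_cong_sets[OF refl setsN[symmetric]])
  qed
  have ev: "{\<omega> \<in> space (PiM I N). (\<Sum>j<n. \<omega> (r j) * v j) < 0} \<in> P.events"
  proof -
    have [measurable]: "(\<lambda>\<omega>. \<Sum>j<n. \<omega> (r j) * v j) \<in> borel_measurable (PiM I N)"
      using cm by (intro borel_measurable_sum borel_measurable_times) auto
    show ?thesis by measurable
  qed
  note rp = row_prob[OF Nd r v]
  show ?thesis
  proof (cases "sg = -1")
    case True
    have "{\<omega> \<in> space (PiM I N). bsgn (\<Sum>j<n. \<omega> (r j) * v j) = sg} = {\<omega> \<in> space (PiM I N). (\<Sum>j<n. \<omega> (r j) * v j) < 0}"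
      using True by (auto simp: bsgn_def)
    then show ?thesis using rp True by simp
  next
    case False
    then have sg1: "sg = 1" using sg by auto
    have "{\<omega> \<in> space (PiM I N). bsgn (\<Sum>j<n. \<omega> (r j) * v j) = sg} = space (PiM I N) - {\<omega> \<in> space (PiM I N). (\<Sum>j<n. \<omega> (r j) * v j) < 0}"
      using sg1 by (auto simp: bsgn_def)
    then show ?thesis using rp sg1 P.prob_compl[OF ev] by simp
  qed
qed



definition NN :: "(nat \<Rightarrow> nat \<Rightarrow> nat \<Rightarrow> real) \<Rightarrow> nat \<times> nat \<times> nat \<Rightarrow> real measure" where
  "NN W = (\<lambda>(k,i,j). density lborel (\<lambda>v. ennreal (normal_density (W k i j) 1 v)))"

lemma aggr_eq: "aggr L d W = PiM (bam_index L d) (NN W)"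
  by (simp add: aggr_def NN_def)

lemma NN_eq: "NN W p = density lborel (\<lambda>y. ennreal (normal_density ((\<lambda>(k,i,j). W k i j) p) 1 y))"
  by (cases p) (simp add: NN_def)

lemma sets_NN: "sets (NN W p) = sets borel"
  by (simp add: NN_eq)

lemma prob_NN: "prob_space (NN W p)"
  unfolding NN_eq by (rule prob_space_normal_density) simp

lemma comp_meas: "(\<lambda>w. w p) \<in> borel_measurable (PiM G (NN W))"
proof (cases "p \<in> G")
  case True
  have "(\<lambda>w. w p) \<in> measurable (PiM G (NN W)) (NN W p)"
    by (rule measurable_component_singleton) (use True in auto)
  then show ?thesis by (subst measurable_cong_sets[OF refl sets_NN[symmetric]])
next
  case False
  obtain a b c where p: "p = (a,b,c)" by (cases p)
  have "(\<lambda>w. w p) \<in> borel_measurable (PiM G (NN W)) \<longleftrightarrow> (\<lambda>w. undefined::real) \<in> borel_measurable (PiM G (NN W))"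
    by (rule measurable_cong) (use False p in \<open>auto simp: space_PiM PiE_def extensional_def\<close>)
  then show ?thesis by simp
qed

lemma bsgn_meas[measurable]: "bsgn \<in> borel_measurable borel"
  unfolding bsgn_def by measurable

lemma layer_meas[measurable]: "(\<lambda>w. layer w d k x i) \<in> borel_measurable (PiM G (NN W))"
proof (induction k arbitrary: i)
  case 0
  then show ?case by simp
next
  case (Suc k)
  have "(\<lambda>w. \<Sum>j<d k. w (Suc k, i, j) * layer w d k x j) \<in> borel_measurable (PiM G (NN W))"
    using Suc comp_meas by (intro borel_measurable_sum borel_measurable_times) auto
  then show ?case by simp
qed

lemma bsgn_cases: "bsgn t = -1 \<or> bsgn t = 1"
  by (simp add: bsgn_def)

lemma layer_pm1: "layer V d (Suc k) x i = -1 \<or> layer V d (Suc k) x i = 1"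
  by (simp add: bsgn_cases)

lemma layer_cong:
  assumes "\<forall>p\<in>bam_index k d. V p = V' p" "i < d k"
  shows "layer V d k x i = layer V' d k x i"
  using assms
proof (induction k arbitrary: i)
  case 0
  then show ?case by simp
next
  case (Suc k)
  have sub: "bam_index k d \<subseteq> bam_index (Suc k) d" by (auto simp: bam_index_def)
  have "\<And>j. j < d k \<Longrightarrow> V (Suc k, i, j) = V' (Suc k, i, j)"
    using Suc.prems by (auto simp: bam_index_def)
  moreover have "\<And>j. j < d k \<Longrightarrow> layer V d k x j = layer V' d k x j"
    using Suc.IH Suc.prems sub by blast
  ultimately show ?case by simp
qed

definition rv :: "(nat \<times> nat \<times> nat \<Rightarrow> real) \<Rightarrow> (nat \<Rightarrow> nat) \<Rightarrow> (nat \<Rightarrow> real) \<Rightarrow> nat \<Rightarrow> nat \<Rightarrow> real" where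
  "rv V d x m = (\<lambda>i. if i < d m then layer V d m x i else 0)"

lemma rv_Rset: "1 \<le> m \<Longrightarrow> rv V d x m \<in> Rset d m"
  using layer_pm1[of V d "m - 1" x] by (auto simp: rv_def Rset_def)

lemma Rset_eq_rv: "s \<in> Rset d m \<Longrightarrow> (\<forall>i<d m. layer V d m x i = s i) \<longleftrightarrow> s = rv V d x m"
  by (auto simp: Rset_def rv_def fun_eq_iff)

lemma finite_Rset: "finite (Rset d m)"
proof -
  have "Rset d m \<subseteq> (\<lambda>f. \<lambda>i. if i < d m then f i else 0) ` (PiE {..<d m} (\<lambda>_. {-1,1::real}))"
  proof
    fix s assume s: "s \<in> Rset d m"
    show "s \<in> (\<lambda>f. \<lambda>i. if i < d m then f i else 0) ` (PiE {..<d m} (\<lambda>_. {-1,1::real}))"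
      by (rule image_eqI[of _ _ "restrict s {..<d m}"]) (use s in \<open>auto simp: Rset_def fun_eq_iff\<close>)
  qed
  moreover have "finite ((\<lambda>f. \<lambda>i. if i < d m then f i else 0) ` (PiE {..<d m} (\<lambda>_. {-1,1::real})))"
    by (intro finite_imageI finite_PiE) auto
  ultimately show ?thesis by (rule finite_subset)
qed

lemma sum_Rset_delta:
  assumes "1 \<le> m"
  shows "(\<Sum>s\<in>Rset d m. f s * (if \<forall>i<d m. layer V d m x i = s i then 1 else 0)) = (f (rv V d x m) :: real)"
proof -
  have "(\<Sum>s\<in>Rset d m. f s * (if \<forall>i<d m. layer V d m x i = s i then 1 else 0))
     = (\<Sum>s\<in>Rset d m. if s = rv V d x m then f s else 0)"
    by (rule sum.cong) (auto simp: Rset_eq_rv)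
  also have "\<dots> = f (rv V d x m)"
    using rv_Rset[OF assms] finite_Rset by simp
  finally show ?thesis .
qed


declare comp_meas[measurable]

definition Ls :: "nat \<Rightarrow> (nat \<Rightarrow> nat) \<Rightarrow> (nat \<Rightarrow> nat \<Rightarrow> nat \<Rightarrow> real) \<Rightarrow> (nat \<Rightarrow> real) \<Rightarrow> nat \<Rightarrow> (nat \<Rightarrow> real) \<Rightarrow> (nat \<times> nat \<times> nat \<Rightarrow> real) set" where
  "Ls L d W x m s = {V \<in> space (PiM (bam_index L d) (NN W)). \<forall>i<d m. layer V d m x i = s i}"

lemma Ls_sets: "Ls L d W x m s \<in> sets (PiM (bam_index L d) (NN W))"
  unfolding Ls_def by measurable

lemma prob_M: "prob_space (PiM I (NN W))"
  by (rule prob_space_PiM) (simp add: prob_NN)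


lemma K0:
  assumes L2: "L \<ge> 2" and dpos: "\<forall>k<L. d k > 0" and xnz: "\<exists>j<d 0. x j \<noteq> 0"
    and s: "s \<in> Rset d 1"
  shows "measure (PiM (bam_index L d) (NN W)) (Ls L d W x 1 s) = P1 d W x s"
proof -
  let ?M = "PiM (bam_index L d) (NN W)"
  define G where "G i = (\<lambda>j. (1::nat,i,j)) ` {..<d 0}" for i :: nat
  define Q where "Q i w = (bsgn (\<Sum>j<d 0. w (1::nat,i,j) * x j) = s i)" for i :: nat and w :: "nat \<times> nat \<times> nat \<Rightarrow> real"
  have d0: "d 0 > 0" and d1: "d 1 > 0" using dpos L2 by auto
  have I: "bam_index L d \<noteq> {}"
  proof -
    have "(1,0,0) \<in> bam_index L d" using d0 d1 L2 by (auto simp: bam_index_def)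
    then show ?thesis by auto
  qed
  have GI: "G i \<subseteq> bam_index L d" if "i \<in> {..<d 1}" for i
    using that L2 by (auto simp: G_def bam_index_def)
  have disj: "disjoint_family_on G {..<d 1}"
    by (auto simp: disjoint_family_on_def G_def)
  have Qm: "{w \<in> space (PiM (G i) (NN W)). Q i w} \<in> sets (PiM (G i) (NN W))" for i
    unfolding Q_def by measurable
  have rs: "\<And>\<omega> i. (\<Sum>j<d 0. restrict \<omega> (G i) (1,i,j) * x j) = (\<Sum>j<d 0. \<omega> (1,i,j) * x j)"
    by (rule sum.cong) (auto simp: G_def)
  have rs': "\<And>\<omega> i. (\<Sum>j<d 0. (if (Suc 0,i,j) \<in> G i then \<omega> (Suc 0,i,j) else undefined) * x j) = (\<Sum>j<d 0. \<omega> (1,i,j) * x j)"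
    by (rule sum.cong) (auto simp: G_def)
  have "measure ?M (\<Inter>i\<in>{..<d 1}. {\<omega> \<in> space ?M. Q i (restrict \<omega> (G i))})
      = (\<Prod>i\<in>{..<d 1}. measure ?M {\<omega> \<in> space ?M. Q i (restrict \<omega> (G i))})"
    by (rule PiM_indep_events[OF prob_NN I _ _ GI disj Qm]) (use d1 in auto)
  moreover have "(\<Inter>i\<in>{..<d 1}. {\<omega> \<in> space ?M. Q i (restrict \<omega> (G i))}) = Ls L d W x 1 s"
    using d1 by (auto simp: Ls_def Q_def rs rs')
  moreover have "measure ?M {\<omega> \<in> space ?M. Q i (restrict \<omega> (G i))}
      = 1/2 + s i / 2 * Erf ((\<Sum>j<d 0. W 1 i j * x j) / (sqrt 2 * vnorm (d 0) x))" if i: "i < d 1" for i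
  proof -
    have eqs: "{\<omega> \<in> space ?M. Q i (restrict \<omega> (G i))}
        = {\<omega> \<in> space ?M. bsgn (\<Sum>j<d 0. \<omega> (1,i,j) * x j) = s i}"
      by (simp only: Q_def rs)
    have sp: "measure ?M {\<omega> \<in> space ?M. bsgn (\<Sum>j<d 0. \<omega> ((\<lambda>j. (1::nat,i,j)) j) * x j) = s i}
       = 1/2 + s i/2 * Erf ((\<Sum>j<d 0. (\<lambda>(k,i,j). W k i j) ((\<lambda>j. (1::nat,i,j)) j) * x j) / sqrt (2 * (\<Sum>j<d 0. (x j)\<^sup>2)))"
    proof (rule sign_prob[where N="NN W" and mu="\<lambda>(k,i,j). W k i j" and r="\<lambda>j. (1::nat,i,j)" and v=x and n="d 0" and I="bam_index L d" and sg="s i"])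
      show "\<And>p. NN W p = density lborel (\<lambda>y. ennreal (normal_density ((\<lambda>(k,i,j). W k i j) p) 1 y))" by (rule NN_eq)
      show "inj_on (\<lambda>j. (1::nat, i, j)) {..<d 0}" by (auto simp: inj_on_def)
      show "(\<lambda>j. (1::nat, i, j)) ` {..<d 0} \<subseteq> bam_index L d" using i L2 by (auto simp: bam_index_def)
      show "\<exists>j<d 0. x j \<noteq> 0" by (rule xnz)
      show "s i = -1 \<or> s i = 1" using s i by (simp add: Rset_def)
    qed
    show ?thesis unfolding eqs using sp by (simp add: vnorm_def real_sqrt_mult)
  qed
  ultimately show ?thesis unfolding P1_def by simp
qed


lemma bam_index_mono: "k \<le> m \<Longrightarrow> bam_index k d \<subseteq> bam_index m d"
  by (auto simp: bam_index_def)

lemma layer_restrict: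
  assumes "k \<le> m" "i < d k"
  shows "layer (restrict \<omega> (bam_index m d)) d k x i = layer \<omega> d k x i"
  by (rule layer_cong) (use assms bam_index_mono[OF assms(1), of d] in auto)

lemma sum_sq_Rset:
  assumes sb: "sb \<in> Rset d m" shows "(\<Sum>j<d m. (sb j)\<^sup>2) = real (d m)"
proof -
  have "(\<Sum>j<d m. (sb j)\<^sup>2) = (\<Sum>j<d m. 1)"
    by (rule sum.cong) (use sb in \<open>auto simp: Rset_def\<close>)
  then show ?thesis by simp
qed

lemma K1:
  assumes L2: "L \<ge> 2" and dpos: "\<forall>k<L. d k > 0" and m: "1 \<le> m" "m < L"
    and sb: "sb \<in> Rset d m" and s: "s \<in> Rset d (Suc m)"
  shows "measure (PiM (bam_index L d) (NN W)) (Ls L d W x 1 s1 \<inter> Ls L d W x m sb \<inter> Ls L d W x (Suc m) s)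
       = measure (PiM (bam_index L d) (NN W)) (Ls L d W x 1 s1 \<inter> Ls L d W x m sb) * Psi d W (Suc m) s sb"
proof -
  let ?M = "PiM (bam_index L d) (NN W)"
  define T where "T = insert None (Some ` {..<d (Suc m)})"
  define G where "G t = (case t of None \<Rightarrow> bam_index m d | Some i \<Rightarrow> (\<lambda>j. (Suc m,i,j)) ` {..<d m})" for t :: "nat option"
  define Q where "Q t w = (case t of None \<Rightarrow> (\<forall>i<d 1. layer w d 1 x i = s1 i) \<and> (\<forall>i<d m. layer w d m x i = sb i)
       | Some i \<Rightarrow> bsgn (\<Sum>j<d m. w (Suc m,i,j) * sb j) = s i)" for t :: "nat option" and w :: "nat \<times> nat \<times> nat \<Rightarrow> real"
  define E where "E t = {\<omega> \<in> space ?M. Q t (restrict \<omega> (G t))}" for t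
  have dm: "d m > 0" using dpos m by auto
  have I: "bam_index L d \<noteq> {}"
  proof -
    have "(1,0,0) \<in> bam_index L d" using dpos L2 by (auto simp: bam_index_def)
    then show ?thesis by auto
  qed
  have GI: "G t \<subseteq> bam_index L d" if "t \<in> T" for t
    using that m by (auto simp: T_def G_def bam_index_def)
  have disj: "disjoint_family_on G T"
    by (auto simp: disjoint_family_on_def G_def T_def bam_index_def split: option.splits)
  have Qm: "{w \<in> space (PiM (G t) (NN W)). Q t w} \<in> sets (PiM (G t) (NN W))" for t
    unfolding Q_def by (cases t) simp_all
  have indep: "measure ?M (\<Inter>t\<in>T. E t) = (\<Prod>t\<in>T. measure ?M (E t))"
    unfolding E_def by (rule PiM_indep_events[OF prob_NN I _ _ GI disj Qm]) (auto simp: T_def)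
  have rs: "(\<Sum>j<d m. restrict \<omega> (G (Some i)) (Suc m,i,j) * sb j) = (\<Sum>j<d m. \<omega> (Suc m,i,j) * sb j)" for \<omega> i
    by (rule sum.cong) (auto simp: G_def)
  have QN: "Q None (restrict \<omega> (bam_index m d)) \<longleftrightarrow> (\<forall>i<d 1. layer \<omega> d 1 x i = s1 i) \<and> (\<forall>i<d m. layer \<omega> d m x i = sb i)" for \<omega>
    unfolding Q_def option.case using m by (auto simp del: layer.simps simp add: layer_restrict)
  have ENone: "E None = Ls L d W x 1 s1 \<inter> Ls L d W x m sb"
    unfolding E_def G_def option.case QN by (auto simp: Ls_def)
  have ESome: "E (Some i) = {\<omega> \<in> space ?M. bsgn (\<Sum>j<d m. \<omega> (Suc m,i,j) * sb j) = s i}" for i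
    unfolding E_def Q_def option.case rs ..
  have lay: "layer \<omega> d (Suc m) x i = bsgn (\<Sum>j<d m. \<omega> (Suc m,i,j) * sb j)"
    if "\<forall>i<d m. layer \<omega> d m x i = sb i" for \<omega> i
  proof -
    have "(\<Sum>j<d m. \<omega> (Suc m,i,j) * layer \<omega> d m x j) = (\<Sum>j<d m. \<omega> (Suc m,i,j) * sb j)"
      by (rule sum.cong) (use that in auto)
    then show ?thesis by simp
  qed
  have inter: "(\<Inter>t\<in>T. E t) = Ls L d W x 1 s1 \<inter> Ls L d W x m sb \<inter> Ls L d W x (Suc m) s"
  proof -
    have "(\<Inter>t\<in>T. E t) = E None \<inter> (\<Inter>i\<in>{..<d (Suc m)}. E (Some i))"
      by (auto simp: T_def)
    also have "\<dots> = Ls L d W x 1 s1 \<inter> Ls L d W x m sb \<inter> Ls L d W x (Suc m) s"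
      unfolding ENone ESome using dm by (auto simp: Ls_def lay)
    finally show ?thesis .
  qed
  have prodT: "(\<Prod>t\<in>T. measure ?M (E t)) = measure ?M (E None) * (\<Prod>i<d (Suc m). measure ?M (E (Some i)))"
    unfolding T_def by (subst prod.insert) (auto simp: prod.reindex)
  have rowp: "measure ?M (E (Some i)) = 1/2 + s i / 2 * Erf ((\<Sum>j<d m. W (Suc m) i j * sb j) / sqrt (2 * real (d m)))"
    if i: "i < d (Suc m)" for i
  proof -
    have sp: "measure ?M {\<omega> \<in> space ?M. bsgn (\<Sum>j<d m. \<omega> ((\<lambda>j. (Suc m,i,j)) j) * sb j) = s i}
       = 1/2 + s i/2 * Erf ((\<Sum>j<d m. (\<lambda>(k,i,j). W k i j) ((\<lambda>j. (Suc m,i,j)) j) * sb j) / sqrt (2 * (\<Sum>j<d m. (sb j)\<^sup>2)))"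
    proof (rule sign_prob[where N="NN W" and mu="\<lambda>(k,i,j). W k i j" and r="\<lambda>j. (Suc m,i,j)" and v=sb and n="d m" and I="bam_index L d" and sg="s i"])
      show "\<And>p. NN W p = density lborel (\<lambda>y. ennreal (normal_density ((\<lambda>(k,i,j). W k i j) p) 1 y))" by (rule NN_eq)
      show "inj_on (\<lambda>j. (Suc m, i, j)) {..<d m}" by (auto simp: inj_on_def)
      show "(\<lambda>j. (Suc m, i, j)) ` {..<d m} \<subseteq> bam_index L d" using i m by (auto simp: bam_index_def)
      show "\<exists>j<d m. sb j \<noteq> 0" using sb dm by (auto simp: Rset_def intro!: exI[of _ 0])
      show "s i = -1 \<or> s i = 1" using s i by (simp add: Rset_def)
    qed
    show ?thesis unfolding ESome using sp by (simp add: sum_sq_Rset[OF sb])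
  qed
  show ?thesis
    using indep unfolding inter prodT ENone
    by (simp add: Psi_def rowp)
qed

lemma split_sum:
  assumes A: "A \<in> sets (PiM (bam_index L d) (NN W))" and m: "1 \<le> m"
  shows "measure (PiM (bam_index L d) (NN W)) A = (\<Sum>s\<in>Rset d m. measure (PiM (bam_index L d) (NN W)) (A \<inter> Ls L d W x m s))"
proof -
  let ?M = "PiM (bam_index L d) (NN W)"
  interpret P: prob_space ?M by (rule prob_M)
  have "A = (\<Union>s\<in>Rset d m. A \<inter> Ls L d W x m s)"
  proof
    show "A \<subseteq> (\<Union>s\<in>Rset d m. A \<inter> Ls L d W x m s)"
    proof
      fix V assume V: "V \<in> A"
      then have "V \<in> space ?M" using A sets.sets_into_space by blast
      then have "V \<in> A \<inter> Ls L d W x m (rv V d x m)"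
        using V rv_Rset[OF m] by (auto simp: Ls_def Rset_eq_rv)
      then show "V \<in> (\<Union>s\<in>Rset d m. A \<inter> Ls L d W x m s)" using rv_Rset[OF m] by blast
    qed
  qed auto
  moreover have "measure ?M (\<Union>s\<in>Rset d m. A \<inter> Ls L d W x m s) = (\<Sum>s\<in>Rset d m. measure ?M (A \<inter> Ls L d W x m s))"
  proof (rule measure_finite_Union)
    show "finite (Rset d m)" by (rule finite_Rset)
    show "(\<lambda>s. A \<inter> Ls L d W x m s) ` Rset d m \<subseteq> sets ?M" using A Ls_sets by auto
    show "disjoint_family_on (\<lambda>s. A \<inter> Ls L d W x m s) (Rset d m)"
      by (auto simp: disjoint_family_on_def Ls_def Rset_eq_rv)
    show "\<And>s. emeasure ?M (A \<inter> Ls L d W x m s) \<noteq> \<infinity>" by simp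
  qed
  ultimately show ?thesis by simp
qed

lemma hrow_Suc: "hrow d W L (Suc n) sb = (\<Sum>s\<in>Rset d (L - n). hrow d W L n s * Psi d W (L - n) s sb)"
  by simp

context
  fixes L :: nat and d :: "nat \<Rightarrow> nat" and W :: "nat \<Rightarrow> nat \<Rightarrow> nat \<Rightarrow> real" and x :: "nat \<Rightarrow> real" and s1 :: "nat \<Rightarrow> real"
  assumes L2: "L \<ge> 2" and dpos: "\<forall>k<L. d k > 0" and dL: "d L = 1"
begin

definition Aval :: "nat \<Rightarrow> real" where
  "Aval m = (\<Sum>s\<in>Rset d m. hrow d W L (L - m) s * measure (PiM (bam_index L d) (NN W)) (Ls L d W x 1 s1 \<inter> Ls L d W x m s))"

lemma Aval_step:
  assumes m: "1 \<le> m" "m < L"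
  shows "Aval (Suc m) = Aval m"
proof -
  let ?M = "PiM (bam_index L d) (NN W)"
  let ?p = "\<lambda>sb. measure ?M (Ls L d W x 1 s1 \<inter> Ls L d W x m sb)"
  have pm: "measure ?M (Ls L d W x 1 s1 \<inter> Ls L d W x (Suc m) s) = (\<Sum>sb\<in>Rset d m. ?p sb * Psi d W (Suc m) s sb)"
    if s: "s \<in> Rset d (Suc m)" for s
  proof -
    have "measure ?M (Ls L d W x 1 s1 \<inter> Ls L d W x (Suc m) s)
       = (\<Sum>sb\<in>Rset d m. measure ?M (Ls L d W x 1 s1 \<inter> Ls L d W x (Suc m) s \<inter> Ls L d W x m sb))"
      by (rule split_sum) (use m Ls_sets in auto)
    moreover have "measure ?M (Ls L d W x 1 s1 \<inter> Ls L d W x (Suc m) s \<inter> Ls L d W x m sb) = ?p sb * Psi d W (Suc m) s sb"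
      if sb: "sb \<in> Rset d m" for sb
    proof -
      have "Ls L d W x 1 s1 \<inter> Ls L d W x (Suc m) s \<inter> Ls L d W x m sb = Ls L d W x 1 s1 \<inter> Ls L d W x m sb \<inter> Ls L d W x (Suc m) s"
        by auto
      then show ?thesis using K1[OF L2 dpos m sb s, of W x s1] by simp
    qed
    ultimately show ?thesis by simp
  qed
  have LS: "L - m = Suc (L - Suc m)" and LS2: "L - (L - Suc m) = Suc m" using m by auto
  have "Aval (Suc m) = (\<Sum>s\<in>Rset d (Suc m). hrow d W L (L - Suc m) s * (\<Sum>sb\<in>Rset d m. ?p sb * Psi d W (Suc m) s sb))"
    unfolding Aval_def by (rule sum.cong[OF refl]) (subst pm, assumption, rule refl)
  also have "\<dots> = (\<Sum>sb\<in>Rset d m. ?p sb * (\<Sum>s\<in>Rset d (Suc m). hrow d W L (L - Suc m) s * Psi d W (Suc m) s sb))"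
    unfolding sum_distrib_left
    by (subst sum.swap) (simp add: mult_ac)
  also have "\<dots> = Aval m"
  proof -
    have h: "hrow d W L (L - m) sb = (\<Sum>s\<in>Rset d (Suc m). hrow d W L (L - Suc m) s * Psi d W (Suc m) s sb)" for sb
      using hrow_Suc[of d W L "L - Suc m" sb] unfolding LS2 LS[symmetric] .
    show ?thesis unfolding Aval_def h by (rule sum.cong[OF refl]) (rule mult.commute)
  qed
  finally show ?thesis .
qed

lemma Aval_1:
  assumes "1 \<le> m" "m \<le> L" shows "Aval m = Aval 1"
  using assms
proof (induction m)
  case 0 then show ?case by simp
next
  case (Suc m)
  show ?case
  proof (cases "m = 0")
    case True then show ?thesis by simp
  next
    case False
    then have "Aval (Suc m) = Aval m" using Suc.prems by (intro Aval_step) auto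
    then show ?thesis using Suc False by simp
  qed
qed


lemma Rset_ext: "s \<in> Rset d m \<Longrightarrow> s' \<in> Rset d m \<Longrightarrow> \<forall>i<d m. s i = s' i \<Longrightarrow> s = s'"
proof
  fix i assume a: "s \<in> Rset d m" "s' \<in> Rset d m" "\<forall>i<d m. s i = s' i"
  show "s i = s' i" by (cases "i < d m") (use a in \<open>auto simp: Rset_def\<close>)
qed

lemma Aval1_val:
  assumes s1: "s1 \<in> Rset d 1"
  shows "Aval 1 = hrow d W L (L - 1) s1 * measure (PiM (bam_index L d) (NN W)) (Ls L d W x 1 s1)"
proof -
  have e: "Ls L d W x 1 s1 \<inter> Ls L d W x 1 s = (if s = s1 then Ls L d W x 1 s1 else {})" if s: "s \<in> Rset d 1" for s
    using s s1 Rset_ext[OF s s1] by (auto simp: Ls_def)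
  have "Aval 1 = (\<Sum>s\<in>Rset d 1. if s = s1 then hrow d W L (L - 1) s1 * measure (PiM (bam_index L d) (NN W)) (Ls L d W x 1 s1) else 0)"
    unfolding Aval_def by (rule sum.cong[OF refl]) (subst e, assumption, simp)
  then show ?thesis using s1 finite_Rset by simp
qed

lemma bam_out_pm: "bam_out V L d x = -1 \<or> bam_out V L d x = 1"
proof -
  have "L = Suc (L - 1)" using L2 by simp
  then show ?thesis unfolding bam_out_def by (metis layer_pm1)
qed

lemma bam_out_meas: "(\<lambda>V. bam_out V L d x) \<in> borel_measurable (PiM G (NN W))"
  unfolding bam_out_def by (rule layer_meas)

lemma int_bo:
  assumes A: "A \<in> sets (PiM (bam_index L d) (NN W))"
  shows "integrable (PiM (bam_index L d) (NN W)) (\<lambda>V. bam_out V L d x * indicator A V)"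
proof -
  interpret P: prob_space "PiM (bam_index L d) (NN W)" by (rule prob_M)
  show ?thesis
  proof (rule P.integrable_const_bound[where B=1])
    show "AE V in PiM (bam_index L d) (NN W). norm (bam_out V L d x * indicator A V) \<le> 1"
    proof (rule AE_I2)
      fix V show "norm (bam_out V L d x * indicator A V) \<le> 1"
        using bam_out_pm[of V] by (auto simp: indicator_def)
    qed
    show "(\<lambda>V. bam_out V L d x * indicator A V) \<in> borel_measurable (PiM (bam_index L d) (NN W))"
      using bam_out_meas A by simp
  qed
qed

lemma AvalL_val:
  shows "Aval L = (\<integral>V. bam_out V L d x * indicator (Ls L d W x 1 s1) V \<partial>PiM (bam_index L d) (NN W))"
proof -
  let ?M = "PiM (bam_index L d) (NN W)"
  interpret P: prob_space ?M by (rule prob_M)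
  have pw: "bam_out V L d x * indicator (Ls L d W x 1 s1) V = (\<Sum>s\<in>Rset d L. s 0 * indicator (Ls L d W x 1 s1 \<inter> Ls L d W x L s) V)"
    if V: "V \<in> space ?M" for V
  proof -
    have "(\<Sum>s\<in>Rset d L. s 0 * indicator (Ls L d W x 1 s1 \<inter> Ls L d W x L s) V)
        = (\<Sum>s\<in>Rset d L. (s 0 * indicator (Ls L d W x 1 s1) V) * (if \<forall>i<d L. layer V d L x i = s i then 1 else 0))"
      by (rule sum.cong[OF refl]) (use V in \<open>auto simp: Ls_def indicator_def\<close>)
    also have "\<dots> = rv V d x L 0 * indicator (Ls L d W x 1 s1) V"
      by (rule sum_Rset_delta) (use L2 in simp)
    also have "rv V d x L 0 = bam_out V L d x"
      using dL by (simp add: rv_def bam_out_def)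
    finally show ?thesis by simp
  qed
  have "(\<integral>V. bam_out V L d x * indicator (Ls L d W x 1 s1) V \<partial>?M)
      = (\<integral>V. (\<Sum>s\<in>Rset d L. s 0 * indicator (Ls L d W x 1 s1 \<inter> Ls L d W x L s) V) \<partial>?M)"
    by (intro Bochner_Integration.integral_cong refl pw)
  also have "\<dots> = (\<Sum>s\<in>Rset d L. (\<integral>V. s 0 * indicator (Ls L d W x 1 s1 \<inter> Ls L d W x L s) V \<partial>?M))"
  proof (rule Bochner_Integration.integral_sum)
    have ev: "\<And>k k' a b. Ls L d W x k a \<inter> Ls L d W x k' b \<inter> space ?M \<in> sets ?M"
      by (intro sets.Int sets.top Ls_sets)
    show "\<And>s. s \<in> Rset d L \<Longrightarrow> integrable ?M (\<lambda>V. s 0 * indicator (Ls L d W x 1 s1 \<inter> Ls L d W x L s) V)"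
      by (auto simp: integrable_indicator_iff ev P.emeasure_finite less_top[symmetric])
  qed
  also have "\<dots> = (\<Sum>s\<in>Rset d L. s 0 * measure ?M (Ls L d W x 1 s1 \<inter> Ls L d W x L s))"
  proof (rule sum.cong[OF refl])
    fix s
    have "Ls L d W x 1 s1 \<inter> Ls L d W x L s \<inter> space ?M = Ls L d W x 1 s1 \<inter> Ls L d W x L s"
      by (auto simp: Ls_def)
    then show "(\<integral>V. s 0 * indicator (Ls L d W x 1 s1 \<inter> Ls L d W x L s) V \<partial>?M) = s 0 * measure ?M (Ls L d W x 1 s1 \<inter> Ls L d W x L s)"
      by simp
  qed
  also have "\<dots> = Aval L"
    unfolding Aval_def by simp
  finally show ?thesis ..
qed

end


lemma factor_pos: "sg = -1 \<or> sg = 1 \<Longrightarrow> 0 < 1/2 + sg/2 * Erf t"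
  using Erf_lt1[of t] Erf_gtm1[of t] by auto

lemma P1_pos:
  assumes s: "s \<in> Rset d 1" shows "0 < P1 d W x s"
  unfolding P1_def
proof (rule prod_pos)
  fix i assume i: "i \<in> {..<d 1}"
  then have "s i = -1 \<or> s i = 1" using s by (auto simp: Rset_def)
  then show "0 < 1/2 + s i / 2 * Erf ((\<Sum>j<d 0. W 1 i j * x j) / (sqrt 2 * vnorm (d 0) x))"
    by (rule factor_pos)
qed

lemma aggr_out_split:
  assumes L2: "L \<ge> 2" and dpos: "\<forall>k<L. d k > 0" and dL: "d L = 1"
  shows "aggr_out L d W x = (\<Sum>s\<in>Rset d 1. (\<integral>V. bam_out V L d x * indicator (Ls L d W x 1 s) V \<partial>PiM (bam_index L d) (NN W)))"
proof -
  let ?M = "PiM (bam_index L d) (NN W)"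
  have pw: "bam_out V L d x = (\<Sum>s\<in>Rset d 1. bam_out V L d x * indicator (Ls L d W x 1 s) V)" if V: "V \<in> space ?M" for V
  proof -
    have "(\<Sum>s\<in>Rset d 1. bam_out V L d x * indicator (Ls L d W x 1 s) V)
       = (\<Sum>s\<in>Rset d 1. bam_out V L d x * (if \<forall>i<d 1. layer V d 1 x i = s i then 1 else 0))"
      by (rule sum.cong[OF refl]) (use V in \<open>auto simp: Ls_def indicator_def\<close>)
    also have "\<dots> = bam_out V L d x"
      by (rule sum_Rset_delta[where f="\<lambda>_. bam_out V L d x"]) simp
    finally show ?thesis by simp
  qed
  have "aggr_out L d W x = (\<integral>V. (\<Sum>s\<in>Rset d 1. bam_out V L d x * indicator (Ls L d W x 1 s) V) \<partial>?M)"
    unfolding aggr_out_def aggr_eq by (intro Bochner_Integration.integral_cong refl pw)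
  also have "\<dots> = (\<Sum>s\<in>Rset d 1. (\<integral>V. bam_out V L d x * indicator (Ls L d W x 1 s) V \<partial>?M))"
    by (rule Bochner_Integration.integral_sum) (intro int_bo[OF L2 dpos dL] Ls_sets)
  finally show ?thesis .
qed

theorem proposition1:
  fixes L :: nat and d :: "nat \<Rightarrow> nat" and W :: "nat \<Rightarrow> nat \<Rightarrow> nat \<Rightarrow> real"
    and x :: "nat \<Rightarrow> real"
  assumes "L \<ge> 2" and "\<forall>k<L. d k > 0" and "d L = 1"
    and "\<exists>j<d 0. x j \<noteq> 0"
  shows "(\<forall>s\<in>Rset d 1. P1 d W x s \<ge> 0) \<and> (\<Sum>s\<in>Rset d 1. P1 d W x s) = 1
       \<and> (\<forall>s\<in>Rset d 1. P1 d W x s =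
            measure (aggr L d W) {V \<in> space (aggr L d W). \<forall>i<d 1. layer V d 1 x i = s i})
       \<and> (\<forall>s\<in>Rset d 1. \<bar>Hvec L d W s\<bar> \<le> 1)
       \<and> (\<forall>s\<in>Rset d 1. Hvec L d W s =
            (\<integral>V. bam_out V L d x * indicator {V \<in> space (aggr L d W). \<forall>i<d 1. layer V d 1 x i = s i} V \<partial>aggr L d W)
            / measure (aggr L d W) {V \<in> space (aggr L d W). \<forall>i<d 1. layer V d 1 x i = s i})
       \<and> aggr_out L d W x = (\<Sum>s\<in>Rset d 1. Hvec L d W s * P1 d W x s)"
proof -
  note L2 = assms(1) and dpos = assms(2) and dL = assms(3) and xnz = assms(4)
  let ?M = "PiM (bam_index L d) (NN W)"
  interpret P: prob_space ?M by (rule prob_M)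
  have evq: "{V \<in> space (aggr L d W). \<forall>i<d 1. layer V d 1 x i = s i} = Ls L d W x 1 s" for s
    by (simp add: Ls_def aggr_eq)
  have meas: "measure ?M (Ls L d W x 1 s) = P1 d W x s" if "s \<in> Rset d 1" for s
    by (rule K0[OF L2 dpos xnz that])
  have Eq: "(\<integral>V. bam_out V L d x * indicator (Ls L d W x 1 s) V \<partial>?M) = Hvec L d W s * P1 d W x s"
    if s: "s \<in> Rset d 1" for s
  proof -
    have "(\<integral>V. bam_out V L d x * indicator (Ls L d W x 1 s) V \<partial>?M) = Aval L d W x s L"
      by (rule AvalL_val[OF L2 dpos dL, symmetric])
    moreover have "Aval L d W x s L = Aval L d W x s 1"
      by (rule Aval_1[OF L2 dpos dL]) (use L2 in auto)
    moreover have "Aval L d W x s 1 = hrow d W L (L - 1) s * measure ?M (Ls L d W x 1 s)"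
      by (rule Aval1_val[OF L2 dpos dL s])
    ultimately show ?thesis using meas[OF s] by (simp add: Hvec_def)
  qed
  have pos: "0 < P1 d W x s" if "s \<in> Rset d 1" for s using P1_pos[OF that] .
  have c1: "\<forall>s\<in>Rset d 1. P1 d W x s \<ge> 0" using pos by (simp add: less_imp_le)
  have c2: "(\<Sum>s\<in>Rset d 1. P1 d W x s) = 1"
  proof -
    have "measure ?M (space ?M) = (\<Sum>s\<in>Rset d 1. measure ?M (space ?M \<inter> Ls L d W x 1 s))"
      by (rule split_sum) simp_all
    moreover have "space ?M \<inter> Ls L d W x 1 s = Ls L d W x 1 s" for s by (auto simp: Ls_def)
    ultimately show ?thesis using meas by (simp add: P.prob_space)
  qed
  have c3: "\<forall>s\<in>Rset d 1. P1 d W x s = measure (aggr L d W) {V \<in> space (aggr L d W). \<forall>i<d 1. layer V d 1 x i = s i}"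
  proof
    fix s assume s: "s \<in> Rset d 1"
    show "P1 d W x s = measure (aggr L d W) {V \<in> space (aggr L d W). \<forall>i<d 1. layer V d 1 x i = s i}"
      unfolding evq using meas[OF s] by (simp add: aggr_eq)
  qed
  have c4: "\<forall>s\<in>Rset d 1. \<bar>Hvec L d W s\<bar> \<le> 1"
  proof
    fix s assume s: "s \<in> Rset d 1"
    have bnd: "\<bar>bam_out V L d x\<bar> \<le> 1" for V using bam_out_pm[OF L2 dpos dL, of V x] by auto
    have i1: "integrable ?M (\<lambda>V. bam_out V L d x * indicator (Ls L d W x 1 s) V)"
      by (intro int_bo[OF L2 dpos dL] Ls_sets)
    have i2: "integrable ?M (indicator (Ls L d W x 1 s) :: _ \<Rightarrow> real)"
      by (simp add: integrable_indicator_iff Ls_sets P.emeasure_finite less_top[symmetric] sets.Int)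
    have a: "norm (\<integral>V. bam_out V L d x * indicator (Ls L d W x 1 s) V \<partial>?M) \<le> (\<integral>V. norm (bam_out V L d x * indicator (Ls L d W x 1 s) V) \<partial>?M)"
      by (rule integral_norm_bound)
    have b: "(\<integral>V. norm (bam_out V L d x * indicator (Ls L d W x 1 s) V) \<partial>?M) \<le> (\<integral>V. indicator (Ls L d W x 1 s) V \<partial>?M)"
    proof (rule integral_mono)
      show "integrable ?M (\<lambda>V. norm (bam_out V L d x * indicator (Ls L d W x 1 s) V))"
        using i1 by (rule integrable_norm)
      show "integrable ?M (indicator (Ls L d W x 1 s) :: _ \<Rightarrow> real)" by (rule i2)
      show "\<And>V. V \<in> space ?M \<Longrightarrow> norm (bam_out V L d x * indicator (Ls L d W x 1 s) V) \<le> indicator (Ls L d W x 1 s) V"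
        using bnd by (auto simp: indicator_def)
    qed
    have "norm (\<integral>V. bam_out V L d x * indicator (Ls L d W x 1 s) V \<partial>?M) \<le> (\<integral>V. indicator (Ls L d W x 1 s) V \<partial>?M)"
      using a b by linarith
    moreover have "(\<integral>V. indicator (Ls L d W x 1 s) V \<partial>?M) = P1 d W x s"
    proof -
      have "Ls L d W x 1 s \<inter> space ?M = Ls L d W x 1 s" by (auto simp: Ls_def)
      then show ?thesis using meas[OF s] by simp
    qed
    ultimately have "\<bar>Hvec L d W s\<bar> * P1 d W x s \<le> 1 * P1 d W x s"
      using Eq[OF s] pos[OF s] by (simp add: abs_mult)
    then show "\<bar>Hvec L d W s\<bar> \<le> 1" using pos[OF s] by (rule mult_right_le_imp_le)
  qed
  have c5: "\<forall>s\<in>Rset d 1. Hvec L d W s =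
            (\<integral>V. bam_out V L d x * indicator {V \<in> space (aggr L d W). \<forall>i<d 1. layer V d 1 x i = s i} V \<partial>aggr L d W)
            / measure (aggr L d W) {V \<in> space (aggr L d W). \<forall>i<d 1. layer V d 1 x i = s i}"
  proof
    fix s assume s: "s \<in> Rset d 1"
    show "Hvec L d W s =
            (\<integral>V. bam_out V L d x * indicator {V \<in> space (aggr L d W). \<forall>i<d 1. layer V d 1 x i = s i} V \<partial>aggr L d W)
            / measure (aggr L d W) {V \<in> space (aggr L d W). \<forall>i<d 1. layer V d 1 x i = s i}"
      unfolding evq using Eq[OF s] meas[OF s] pos[OF s] by (simp add: aggr_eq)
  qed
  have c6: "aggr_out L d W x = (\<Sum>s\<in>Rset d 1. Hvec L d W s * P1 d W x s)"
    unfolding aggr_out_split[OF L2 dpos dL] by (rule sum.cong[OF refl]) (rule Eq)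
  show ?thesis using c1 c2 c3 c4 c5 c6 by blast
qed

end
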